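(* Let $n\ge2$ and let $X_1,\dots,X_n$ be operators in a complex Hilbert space $\mathcal{H}$, each Hermitian or skew-Hermitian, defined on a common invariant domain $D$. Let $m^{(1)},\dots,m^{(n)}$ be sequences of positive numbers satisfying (A0), (A1), (A2). Suppose that for every $j\in\{1,\dots,n-1\}$ the pair $(m^{(j)},m^{(n)})$ satisfies (A3) and $[X_j,X_n]=c_jI$ on $D$ for some $c_j\in\mathbb{C}$. Put $\mathbf{X}=(X_1,\dots,X_n)$, $\mathbf{X}'=(X_1,\dots,X_{n-1})$, $\mathbf{m}=(m^{(1)},\dots,m^{(n)})$, $\mathbf{m}'=(m^{(1)},\dots,m^{(n-1)})$. Then $u\in D$ belongs to $\mathcal{S}_{\mathbf{m}}(\mathbf{X})$ if and only if $u\in\mathcal{S}_{\mathbf{m}'}(\mathbf{X}')\cap\mathcal{S}_{m^{(n)}}(X_n)$.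
   Context: A common invariant domain $D$ means $D\subset\mathrm{Dom}(X_j)$ and $X_jD\subset D$ for all $j$. Notation: for $N\ge1$, $M(N)=\bigcup_{k\ge1}\{1,\dots,N\}^k$; for $\alpha=(i_1,\dots,i_k)\in M(N)$, $|\alpha|=k$, $|\alpha|_j=\mathrm{card}\{l: i_l=j\}$. For operators $\mathbf{Y}=(Y_1,\dots,Y_N)$, $\mathbf{Y}_\alpha=Y_{i_1}\cdots Y_{i_k}$ and $C^\infty(\mathbf{Y})=\{u: u\in\mathrm{Dom}(\mathbf{Y}_\alpha)\ \forall\alpha\in M(N)\}$. For sequences $\mathbf{p}=(p^{(1)},\dots,p^{(N)})$ of positive reals, $\mathbf{p}_\alpha=p^{(1)}_{|\alpha|_1}\cdots p^{(N)}_{|\alpha|_N}$ and $\mathcal{S}_{\mathbf{p}}(\mathbf{Y})=\{u\in C^\infty(\mathbf{Y}): \exists A,C>0,\ \|\mathbf{Y}_\alpha u\|\le CA^{|\alpha|}\mathbf{p}_\alpha\ \forall\alpha\in M(N)\}$ (for $N=1$: $\|Y^ku\|\le CA^kp_k$ for all $k\ge1$). Conditions: (A0) $m^{(j)}_0=m^{(j)}_1=1$; (A1) $(m^{(j)}_p)^2\le m^{(j)}_{p-1}m^{(j)}_{p+1}$ for $p\ge1$; (A2) there is $H>0$ with $m^{(j)}_{p+q}\le H^{p+q}m^{(j)}_pm^{(j)}_q$ for all $j$, $p,q\in\mathbb{N}$. A pair $(m^{(j)},m^{(k)})$ satisfies (A3) if there is $L\ge1$ with $p\,m^{(j)}_{p-1}m^{(k)}_{p-1}\le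 L\,m^{(j)}_pm^{(k)}_p$ for all $p\ge1$. *)

theory Defs
  imports "HOL-Analysis.Analysis"
begin

text \<open>The distribution has no complex inner-product spaces, so we introduce the
standard notion as a type class: a complete real normed vector space with a
compatible complex scalar multiplication and a complex inner product
(linear in the second, conjugate-linear in the first argument) inducing the norm.\<close>

class complex_hilbert = real_normed_vector + complete_space +
  fixes scaleC :: "complex \<Rightarrow> 'a \<Rightarrow> 'a"
    and cinner :: "'a \<Rightarrow> 'a \<Rightarrow> complex"
  assumes scaleC_add_right: "scaleC a (x + y) = scaleC a x + scaleC a y"
    and scaleC_add_left: "scaleC (a + b) x = scaleC a x + scaleC b x"
    and scaleC_scaleC: "scaleC a (scaleC b x) = scaleC (a * b) x"
    and scaleC_one: "scaleC 1 x = x"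
    and scaleR_scaleC: "scaleR r x = scaleC (complex_of_real r) x"
    and cinner_commute: "cinner x y = cnj (cinner y x)"
    and cinner_add_left: "cinner (x + y) z = cinner x z + cinner y z"
    and cinner_scaleC_left: "cinner (scaleC a x) y = cnj a * cinner x y"
    and cinner_self_real: "Im (cinner x x) = 0"
    and cinner_self_nonneg: "0 \<le> Re (cinner x x)"
    and cinner_self_eq_zero: "cinner x x = 0 \<longleftrightarrow> x = 0"
    and norm_eq_sqrt_cinner: "norm x = sqrt (Re (cinner x x))"

text \<open>An operator is a map \<open>T\<close> together with its domain \<open>DT\<close>; only the values on
\<open>DT\<close> matter.\<close>

definition linear_op :: "('a::complex_hilbert \<Rightarrow> 'a) \<Rightarrow> 'a set \<Rightarrow> bool" where
  "linear_op T DT \<longleftrightarrow> 0 \<in> DT \<and>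
     (\<forall>x\<in>DT. \<forall>y\<in>DT. x + y \<in> DT \<and> T (x + y) = T x + T y) \<and>
     (\<forall>c. \<forall>x\<in>DT. scaleC c x \<in> DT \<and> T (scaleC c x) = scaleC c (T x))"

definition hermitian_op :: "('a::complex_hilbert \<Rightarrow> 'a) \<Rightarrow> 'a set \<Rightarrow> bool" where
  "hermitian_op T DT \<longleftrightarrow> linear_op T DT \<and>
     (\<forall>x\<in>DT. \<forall>y\<in>DT. cinner (T x) y = cinner x (T y))"

definition skew_hermitian_op :: "('a::complex_hilbert \<Rightarrow> 'a) \<Rightarrow> 'a set \<Rightarrow> bool" where
  "skew_hermitian_op T DT \<longleftrightarrow> linear_op T DT \<and>
     (\<forall>x\<in>DT. \<forall>y\<in>DT. cinner (T x) y = - cinner x (T y))"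

text \<open>A multi-index \<open>\<alpha> = (i\<^sub>1,\<dots>,i\<^sub>k) \<in> M(N)\<close> is a nonempty list with entries
in \<open>{1..N}\<close>. \<open>Y\<^sub>\<alpha> = Y\<^bsub>i\<^sub>1\<^esub> \<cdots> Y\<^bsub>i\<^sub>k\<^esub>\<close>, so \<open>Y\<^bsub>i\<^sub>k\<^esub>\<close> acts first.\<close>

definition multi_indices :: "nat \<Rightarrow> nat list set" where
  "multi_indices N = {\<alpha>. \<alpha> \<noteq> [] \<and> set \<alpha> \<subseteq> {1..N}}"

fun op_word :: "(nat \<Rightarrow> 'a \<Rightarrow> 'a) \<Rightarrow> nat list \<Rightarrow> 'a \<Rightarrow> 'a" where
  "op_word Y [] u = u"
| "op_word Y (i # \<alpha>) u = Y i (op_word Y \<alpha> u)"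

fun in_dom_word :: "(nat \<Rightarrow> 'a \<Rightarrow> 'a) \<Rightarrow> (nat \<Rightarrow> 'a set) \<Rightarrow> nat list \<Rightarrow> 'a \<Rightarrow> bool" where
  "in_dom_word Y DY [] u = True"
| "in_dom_word Y DY (i # \<alpha>) u = (in_dom_word Y DY \<alpha> u \<and> op_word Y \<alpha> u \<in> DY i)"

definition C_inf :: "nat \<Rightarrow> (nat \<Rightarrow> 'a \<Rightarrow> 'a) \<Rightarrow> (nat \<Rightarrow> 'a set) \<Rightarrow> 'a set" where
  "C_inf N Y DY = {u. \<forall>\<alpha>\<in>multi_indices N. in_dom_word Y DY \<alpha> u}"

text \<open>\<open>|\<alpha>|\<^sub>j\<close> and \<open>p\<^sub>\<alpha> = p\<^sup>(\<^sup>1\<^sup>)\<^bsub>|\<alpha>|\<^sub>1\<^esub> \<cdots> p\<^sup>(\<^sup>N\<^sup>)\<^bsub>|\<alpha>|\<^sub>N\<^esub>\<close>; \<open>p j k\<close> stands for \<open>p\<^sup>(\<^sup>j\<^sup>)\<^sub>k\<close>.\<close>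
definition count_idx :: "nat list \<Rightarrow> nat \<Rightarrow> nat" where
  "count_idx \<alpha> j = length (filter (\<lambda>i. i = j) \<alpha>)"

definition seq_weight :: "nat \<Rightarrow> (nat \<Rightarrow> nat \<Rightarrow> real) \<Rightarrow> nat list \<Rightarrow> real" where
  "seq_weight N p \<alpha> = (\<Prod>j=1..N. p j (count_idx \<alpha> j))"

definition S_space :: "nat \<Rightarrow> (nat \<Rightarrow> nat \<Rightarrow> real) \<Rightarrow> (nat \<Rightarrow> 'a::complex_hilbert \<Rightarrow> 'a)
                       \<Rightarrow> (nat \<Rightarrow> 'a set) \<Rightarrow> 'a set" where
  "S_space N p Y DY = {u \<in> C_inf N Y DY. \<exists>A>0. \<exists>C>0. \<forall>\<alpha>\<in>multi_indices N.
      norm (op_word Y \<alpha> u) \<le> C * A ^ length \<alpha> * seq_weight N p \<alpha>}"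

definition cond_A0 :: "(nat \<Rightarrow> real) \<Rightarrow> bool" where
  "cond_A0 m \<longleftrightarrow> m 0 = 1 \<and> m 1 = 1"

definition cond_A1 :: "(nat \<Rightarrow> real) \<Rightarrow> bool" where
  "cond_A1 m \<longleftrightarrow> (\<forall>p\<ge>1. (m p)\<^sup>2 \<le> m (p - 1) * m (p + 1))"

definition cond_A2 :: "nat \<Rightarrow> (nat \<Rightarrow> nat \<Rightarrow> real) \<Rightarrow> bool" where
  "cond_A2 N m \<longleftrightarrow> (\<exists>H>0. \<forall>j\<in>{1..N}. \<forall>p q. m j (p + q) \<le> H ^ (p + q) * m j p * m j q)"

definition cond_A3 :: "(nat \<Rightarrow> real) \<Rightarrow> (nat \<Rightarrow> real) \<Rightarrow> bool" where
  "cond_A3 mj mk \<longleftrightarrow> (\<exists>L\<ge>1. \<forall>p\<ge>1. real p * mj (p - 1) * mk (p - 1) \<le> L * mj p * mk p)"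

end

theory Submission
  imports Defs "HOL-Library.Multiset"
begin


lemma cinner_zero_left[simp]: "cinner 0 (y::'a::complex_hilbert) = 0"
proof -
  have "cinner (0+0) y = cinner 0 y + cinner 0 y" by (rule cinner_add_left)
  thus ?thesis by simp
qed
lemma cnj_cinner: "cnj (cinner (x::'a::complex_hilbert) y) = cinner y x"
  using cinner_commute[of y x] by simp
lemma cinner_add_right: "cinner (x::'a::complex_hilbert) (y + z) = cinner x y + cinner x z"
proof -
  have "cinner x (y + z) = cnj (cinner (y + z) x)" by (rule cinner_commute)
  also have "\<dots> = cnj (cinner y x) + cnj (cinner z x)" by (simp only: cinner_add_left complex_cnj_add)
  finally show ?thesis by (simp only: cnj_cinner)
qed
lemma cinner_scaleC_right: "cinner (x::'a::complex_hilbert) (scaleC a y) = a * cinner x y"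
proof -
  have "cinner x (scaleC a y) = cnj (cinner (scaleC a y) x)" by (rule cinner_commute)
  also have "\<dots> = a * cnj (cinner y x)" by (simp only: cinner_scaleC_left complex_cnj_mult complex_cnj_cnj)
  finally show ?thesis by (simp only: cnj_cinner)
qed
lemma cinner_zero_right[simp]: "cinner (x::'a::complex_hilbert) 0 = 0"
  using cinner_commute[of x 0] by simp
lemma scaleC_minus1: "scaleC (-1) x = - (x::'a::complex_hilbert)"
proof -
  have "scaleC (-1) x = scaleR (-1) x" using scaleR_scaleC[of "-1" x] by simp
  also have "\<dots> = - x" by (rule scaleR_minus1_left)
  finally show ?thesis .
qed
lemma cinner_minus_right: "cinner (x::'a::complex_hilbert) (- y) = - cinner x y"
  using cinner_scaleC_right[of x "-1" y] by (simp add: scaleC_minus1)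
lemma cinner_diff_right: "cinner (x::'a::complex_hilbert) (y - z) = cinner x y - cinner x z"
  using cinner_add_right[of x y "-z"] cinner_minus_right[of x z] by simp
lemma cinner_minus_left: "cinner (- x) y = - cinner (x::'a::complex_hilbert) y"
  using cinner_scaleC_left[of "-1" x y] by (simp add: scaleC_minus1)
lemma cinner_diff_left: "cinner (x - y) z = cinner (x::'a::complex_hilbert) z - cinner y z"
  using cinner_add_left[of x "-y" z] cinner_minus_left[of y z] by simp
lemma cinner_sum_right: "cinner (x::'a::complex_hilbert) (sum f I) = (\<Sum>i\<in>I. cinner x (f i))"
  by (induction I rule: infinite_finite_induct) (auto simp: cinner_add_right)
lemma cinner_self_eq: "cinner x x = complex_of_real ((norm (x::'a::complex_hilbert))^2)"
  using cinner_self_real[of x] cinner_self_nonneg[of x] norm_eq_sqrt_cinner[of x]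
  by (simp add: complex_eq_iff)
lemma cinner_self_cmod: "cmod (cinner x x) = (norm (x::'a::complex_hilbert))^2"
  unfolding cinner_self_eq norm_of_real by simp

lemma cauchy_schwarz: "cmod (cinner x y) \<le> norm (x::'a::complex_hilbert) * norm y"
proof (cases "y = 0")
  case True thus ?thesis by simp
next
  case False
  define yy where "yy = (norm y)^2"
  have yy: "yy > 0" using False by (simp add: yy_def)
  define t where "t = cinner y x / complex_of_real yy"
  have "0 \<le> Re (cinner (x - scaleC t y) (x - scaleC t y))" by (rule cinner_self_nonneg)
  also have "cinner (x - scaleC t y) (x - scaleC t y)
     = cinner x x - t * cinner x y - cnj t * cinner y x + cnj t * t * cinner y y"
    by (simp add: cinner_diff_left cinner_diff_right cinner_scaleC_left cinner_scaleC_right algebra_simps)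
  also have "cinner y y = complex_of_real yy" by (simp add: yy_def cinner_self_eq)
  also have "cinner x x = complex_of_real ((norm (x::'a::complex_hilbert))^2)" by (simp add: cinner_self_eq)
  finally have F: "0 \<le> Re (complex_of_real ((norm x)^2) - t * cinner x y - cnj t * cinner y x + cnj t * t * complex_of_real yy)" .
  have E: "complex_of_real ((norm x)^2) - t * cinner x y - cnj t * cinner y x + cnj t * t * complex_of_real yy
     = complex_of_real ((norm x)^2 - (cmod (cinner y x))^2 / yy)"
  proof -
    define z where "z = cinner y x"
    have cz: "cinner x y = cnj z" unfolding z_def by (rule cinner_commute)
    have n2: "z * cnj z = complex_of_real ((cmod z)^2)" by (rule complex_norm_square[symmetric])
    have yc: "complex_of_real yy \<noteq> 0" using yy by simp
    have t: "t = z / complex_of_real yy" unfolding t_def z_def ..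
    have ct: "cnj t = cnj z / complex_of_real yy" unfolding t by simp
    have 1: "t * cnj z = complex_of_real ((cmod z)^2 / yy)"
    proof -
      have "t * cnj z = (z * cnj z) / complex_of_real yy" by (simp add: t)
      also have "\<dots> = complex_of_real ((cmod z)^2) / complex_of_real yy" by (simp only: n2)
      finally show ?thesis by (simp only: of_real_divide)
    qed
    have 2: "cnj t * z = complex_of_real ((cmod z)^2 / yy)"
    proof -
      have "cnj t * z = (z * cnj z) / complex_of_real yy" by (simp add: ct)
      also have "\<dots> = complex_of_real ((cmod z)^2) / complex_of_real yy" by (simp only: n2)
      finally show ?thesis by (simp only: of_real_divide)
    qed
    have 3: "cnj t * t * complex_of_real yy = complex_of_real ((cmod z)^2 / yy)"
    proof -
      have "cnj t * t * complex_of_real yy = (z * cnj z) / complex_of_real yy" using yc by (simp add: ct t)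
      also have "\<dots> = complex_of_real ((cmod z)^2) / complex_of_real yy" by (simp only: n2)
      finally show ?thesis by (simp only: of_real_divide)
    qed
    show ?thesis unfolding cz z_def[symmetric] 1 2 3 by simp
  qed
  have "0 \<le> Re (complex_of_real ((norm x)^2 - (cmod (cinner y x))^2 / yy))" using F unfolding E .
  hence "0 \<le> (norm x)^2 - (cmod (cinner y x))^2 / yy" by simp
  hence "(cmod (cinner y x))^2 / yy \<le> (norm x)^2" by simp
  hence "(cmod (cinner y x))^2 \<le> (norm x)^2 * yy" using yy by (simp add: divide_le_eq)
  hence "(cmod (cinner y x))^2 \<le> (norm x * norm y)^2" by (simp add: yy_def power_mult_distrib)
  hence "cmod (cinner y x) \<le> norm x * norm y" by (rule power2_le_imp_le) auto
  moreover have "cmod (cinner x y) = cmod (cinner y x)" by (subst cinner_commute) (rule complex_mod_cnj)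
  ultimately show ?thesis by simp
qed


lemma scaleC_zero_left[simp]: "scaleC 0 (x::'a::complex_hilbert) = 0"
  using scaleR_scaleC[of 0 x] by simp

fun dl :: "nat \<Rightarrow> 'b list \<Rightarrow> 'b list" where
  "dl p [] = []"
| "dl 0 (x # xs) = xs"
| "dl (Suc p) (x # xs) = x # dl p xs"

lemma set_dl: "set (dl p w) \<subseteq> set w"
  by (induction p w rule: dl.induct) auto

lemma length_dl: "p < length w \<Longrightarrow> length (dl p w) = length w - 1"
  by (induction p w rule: dl.induct) auto

lemma op_word_append: "op_word Y (xs @ ys) v = op_word Y xs (op_word Y ys v)"
  by (induction xs) auto

locale ops =
  fixes n :: nat and X :: "nat \<Rightarrow> 'a::complex_hilbert \<Rightarrow> 'a" and DX :: "nat \<Rightarrow> 'a set"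
    and D :: "'a set" and c :: "nat \<Rightarrow> complex"
  assumes herm: "\<forall>j\<in>{1..n}. hermitian_op (X j) (DX j) \<or> skew_hermitian_op (X j) (DX j)"
    and D_sub: "\<forall>j\<in>{1..n}. D \<subseteq> DX j"
    and D_inv: "\<forall>j\<in>{1..n}. X j ` D \<subseteq> D"
    and comm: "\<forall>j\<in>{1..n-1}. \<forall>v\<in>D. X j (X n v) - X n (X j v) = scaleC (c j) v"
begin

lemma lin: "j \<in> {1..n} \<Longrightarrow> linear_op (X j) (DX j)"
  using herm unfolding hermitian_op_def skew_hermitian_op_def by blast

lemma DX_add: "j \<in> {1..n} \<Longrightarrow> x \<in> DX j \<Longrightarrow> y \<in> DX j \<Longrightarrow> x + y \<in> DX j \<and> X j (x + y) = X j x + X j y"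
  using lin unfolding linear_op_def by blast

lemma DX_scale: "j \<in> {1..n} \<Longrightarrow> x \<in> DX j \<Longrightarrow> scaleC a x \<in> DX j \<and> X j (scaleC a x) = scaleC a (X j x)"
  using lin unfolding linear_op_def by blast

lemma DX_zero: "j \<in> {1..n} \<Longrightarrow> 0 \<in> DX j \<and> X j 0 = 0"
proof -
  assume j: "j \<in> {1..n}"
  hence z: "0 \<in> DX j" using lin unfolding linear_op_def by blast
  have "X j (scaleC 0 0) = scaleC 0 (X j 0)" using DX_scale[OF j z] by blast
  thus ?thesis using z by simp
qed

lemma DX_minus: "j \<in> {1..n} \<Longrightarrow> x \<in> DX j \<Longrightarrow> - x \<in> DX j \<and> X j (- x) = - X j x"
  using DX_scale[of j x "-1"] by (simp add: scaleC_minus1)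

lemma DX_diff: "j \<in> {1..n} \<Longrightarrow> x \<in> DX j \<Longrightarrow> y \<in> DX j \<Longrightarrow> x - y \<in> DX j \<and> X j (x - y) = X j x - X j y"
  using DX_add[of j x "-y"] DX_minus[of j y] by simp

lemma DX_sum: assumes j: "j \<in> {1..n}" and "finite I" "\<forall>i\<in>I. f i \<in> DX j"
  shows "sum f I \<in> DX j \<and> X j (sum f I) = (\<Sum>i\<in>I. X j (f i))"
  using assms(2,3)
proof (induction I rule: finite_induct)
  case empty thus ?case using DX_zero[OF j] by simp
next
  case (insert i I)
  thus ?case using DX_add[OF j, of "f i" "sum f I"] by simp
qed

lemma inD: "j \<in> {1..n} \<Longrightarrow> v \<in> D \<Longrightarrow> X j v \<in> D"
  using D_inv by blast

lemma inDX: "j \<in> {1..n} \<Longrightarrow> v \<in> D \<Longrightarrow> v \<in> DX j"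
  using D_sub by blast

lemma word_D: "set w \<subseteq> {1..n} \<Longrightarrow> v \<in> D \<Longrightarrow> op_word X w v \<in> D"
  by (induction w) (auto intro: inD)

lemma adj: "j \<in> {1..n} \<Longrightarrow> x \<in> D \<Longrightarrow> y \<in> D \<Longrightarrow> cmod (cinner (X j x) y) = cmod (cinner x (X j y))"
proof -
  assume j: "j \<in> {1..n}" and x: "x \<in> D" and y: "y \<in> D"
  hence x': "x \<in> DX j" and y': "y \<in> DX j" using inDX by auto
  from herm j consider "hermitian_op (X j) (DX j)" | "skew_hermitian_op (X j) (DX j)" by blast
  thus ?thesis
  proof cases
    case 1 thus ?thesis using x' y' unfolding hermitian_op_def by auto
  next
    case 2
    hence "cinner (X j x) y = - cinner x (X j y)" using x' y' unfolding skew_hermitian_op_def by auto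
    thus ?thesis by simp
  qed
qed

lemma adj_word: "set w \<subseteq> {1..n} \<Longrightarrow> x \<in> D \<Longrightarrow> y \<in> D \<Longrightarrow>
   cmod (cinner (op_word X w x) y) = cmod (cinner x (op_word X (rev w) y))"
proof (induction w arbitrary: y)
  case Nil thus ?case by simp
next
  case (Cons i w)
  have i: "i \<in> {1..n}" and w: "set w \<subseteq> {1..n}" using Cons.prems by auto
  have "cmod (cinner (op_word X (i # w) x) y) = cmod (cinner (X i (op_word X w x)) y)" by simp
  also have "\<dots> = cmod (cinner (op_word X w x) (X i y))"
    using adj[OF i word_D[OF w Cons.prems(2)] Cons.prems(3)] .
  also have "\<dots> = cmod (cinner x (op_word X (rev w) (X i y)))"
    using Cons.IH[OF w Cons.prems(2) inD[OF i Cons.prems(3)]] .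
  also have "\<dots> = cmod (cinner x (op_word X (rev (i # w)) y))" by (simp add: op_word_append)
  finally show ?case .
qed

definition cc :: "nat list \<Rightarrow> nat \<Rightarrow> complex" where
  "cc w p = (if w ! p = n then 0 else c (w ! p))"

lemma commute_word:
  assumes "set w \<subseteq> {1..n}" "v \<in> D" "n \<ge> 1"
  shows "X n (op_word X w v) = op_word X w (X n v) - (\<Sum>p<length w. scaleC (cc w p) (op_word X (dl p w) v))"
  using assms
proof (induction w arbitrary: v)
  case Nil thus ?case by simp
next
  case (Cons y ys)
  have y: "y \<in> {1..n}" and ys: "set ys \<subseteq> {1..n}" using Cons.prems by auto
  have nn: "n \<in> {1..n}" using Cons.prems by auto
  define t where "t = op_word X ys v"
  have tD: "t \<in> D" unfolding t_def using word_D[OF ys Cons.prems(2)] .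
  have IH: "X n t = op_word X ys (X n v) - (\<Sum>p<length ys. scaleC (cc ys p) (op_word X (dl p ys) v))"
    unfolding t_def by (rule Cons.IH[OF ys Cons.prems(2) Cons.prems(3)])
  have dlD: "\<And>p. op_word X (dl p ys) v \<in> D" using word_D set_dl ys Cons.prems(2) by (meson subset_trans)
  have sumD: "\<And>j. j \<in> {1..n} \<Longrightarrow> (\<Sum>p<length ys. scaleC (cc ys p) (op_word X (dl p ys) v)) \<in> DX j
      \<and> X j (\<Sum>p<length ys. scaleC (cc ys p) (op_word X (dl p ys) v))
        = (\<Sum>p<length ys. scaleC (cc ys p) (X j (op_word X (dl p ys) v)))"
  proof -
    fix j assume j: "j \<in> {1..n}"
    have "\<forall>p\<in>{..<length ys}. scaleC (cc ys p) (op_word X (dl p ys) v) \<in> DX j"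
      using DX_scale[OF j] inDX[OF j dlD] by blast
    moreover have "\<And>p. X j (scaleC (cc ys p) (op_word X (dl p ys) v)) = scaleC (cc ys p) (X j (op_word X (dl p ys) v))"
      using DX_scale[OF j] inDX[OF j dlD] by blast
    ultimately show "?thesis j" using DX_sum[OF j, of "{..<length ys}"] by simp
  qed
  have wnD: "op_word X ys (X n v) \<in> D" using word_D[OF ys inD[OF nn Cons.prems(2)]] .
  have split: "(\<Sum>p<length (y # ys). scaleC (cc (y # ys) p) (op_word X (dl p (y # ys)) v))
      = scaleC (cc (y # ys) 0) t + (\<Sum>p<length ys. scaleC (cc ys p) (X y (op_word X (dl p ys) v)))"
    unfolding length_Cons sum.lessThan_Suc_shift by (simp add: cc_def t_def cong: if_cong)
  show ?case
  proof (cases "y = n")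
    case True
    have "X n (op_word X (y # ys) v) = X n (X n t)" using True by (simp add: t_def)
    also have "\<dots> = X n (op_word X ys (X n v)) - X n (\<Sum>p<length ys. scaleC (cc ys p) (op_word X (dl p ys) v))"
      unfolding IH using DX_diff[OF nn inDX[OF nn wnD] conjunct1[OF sumD[OF nn]]] by blast
    also have "\<dots> = op_word X (y # ys) (X n v) - (\<Sum>p<length ys. scaleC (cc ys p) (X y (op_word X (dl p ys) v)))"
      using sumD[OF nn] True by simp
    also have "\<dots> = op_word X (y # ys) (X n v) - (\<Sum>p<length (y # ys). scaleC (cc (y # ys) p) (op_word X (dl p (y # ys)) v))"
      unfolding split using True by (simp add: cc_def)
    finally show ?thesis .
  next
    case False
    hence yJ: "y \<in> {1..n-1}" using y by auto
    have cm: "X y (X n t) - X n (X y t) = scaleC (c y) t" using comm yJ tD by blast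
    have "X n (op_word X (y # ys) v) = X n (X y t)" by (simp add: t_def)
    also have "\<dots> = X y (X n t) - scaleC (c y) t" using cm by (simp add: algebra_simps)
    also have "X y (X n t) = X y (op_word X ys (X n v)) - X y (\<Sum>p<length ys. scaleC (cc ys p) (op_word X (dl p ys) v))"
      unfolding IH using DX_diff[OF y inDX[OF y wnD] conjunct1[OF sumD[OF y]]] by blast
    also have "\<dots> = op_word X (y # ys) (X n v) - (\<Sum>p<length ys. scaleC (cc ys p) (X y (op_word X (dl p ys) v)))"
      using sumD[OF y] by simp
    finally show ?thesis unfolding split using False by (simp add: cc_def algebra_simps)
  qed
qed

end


definition ff :: "nat \<Rightarrow> nat \<Rightarrow> real" where
  "ff z r = real (z choose r) * fact r"

lemma ff_Suc_Suc: "ff (Suc z) (Suc s) = ff z (Suc s) + real (Suc s) * ff z s"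
  unfolding ff_def by (simp add: algebra_simps)

lemma ff_0[simp]: "ff z 0 = 1" by (simp add: ff_def)

fun Phi :: "nat \<Rightarrow> (nat \<Rightarrow> real) \<Rightarrow> (nat multiset \<Rightarrow> nat \<Rightarrow> real) \<Rightarrow> nat multiset \<Rightarrow> nat \<Rightarrow> nat \<Rightarrow> nat list \<Rightarrow> nat multiset \<Rightarrow> real" where
  "Phi n cw P b k z [] R = ff z (size R) * prod_mset (image_mset cw R) * P b (k + z - size R)"
| "Phi n cw P b k z (x # w) R = (if x = n then Phi n cw P b k z w R
     else Phi n cw P (add_mset x b) k z w R + Phi n cw P b k z w (add_mset x R))"

lemma prod_remove: "x \<in># R \<Longrightarrow> cw x * prod_mset (image_mset cw (R - {#x#})) = prod_mset (image_mset cw R)"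
  by (metis insert_DiffM image_mset_add_mset prod_mset.add_mset)

lemma Phi_base_id:
  "Phi n cw P b k (Suc z) [] R = Phi n cw P b (Suc k) z [] R
     + (\<Sum>x\<in>#R. cw x * Phi n cw P b k z [] (R - {#x#}))"
proof (cases "size R")
  case 0 thus ?thesis by simp
next
  case (Suc s)
  define W where "W = prod_mset (image_mset cw R)"
  define Pv where "Pv = P b (k + z - s)"
  have "(\<Sum>x\<in>#R. cw x * Phi n cw P b k z [] (R - {#x#})) = (\<Sum>x\<in>#R. ff z s * W * Pv)"
  proof (rule arg_cong[where f=sum_mset], rule image_mset_cong)
    fix x assume x: "x \<in># R"
    have "size (R - {#x#}) = s" using x Suc by (simp add: size_Diff_singleton)
    hence "cw x * Phi n cw P b k z [] (R - {#x#}) = ff z s * (cw x * prod_mset (image_mset cw (R - {#x#}))) * Pv"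
      by (simp add: Pv_def)
    also have "\<dots> = ff z s * W * Pv" unfolding W_def prod_remove[OF x] ..
    finally show "cw x * Phi n cw P b k z [] (R - {#x#}) = ff z s * W * Pv" .
  qed
  also have "\<dots> = real (Suc s) * (ff z s * W * Pv)" using Suc by simp
  finally have S: "(\<Sum>x\<in>#R. cw x * Phi n cw P b k z [] (R - {#x#})) = real (Suc s) * (ff z s * W * Pv)" .
  have L: "Phi n cw P b k (Suc z) [] R = ff (Suc z) (Suc s) * W * Pv" using Suc by (simp add: W_def Pv_def)
  have R1: "Phi n cw P b (Suc k) z [] R = ff z (Suc s) * W * Pv" using Suc by (simp add: W_def Pv_def)
  show ?thesis unfolding L R1 S ff_Suc_Suc by (simp add: algebra_simps)
qed

lemma Phi_id:
  "Phi n cw P b k (Suc z) w R = Phi n cw P b (Suc k) z w R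
     + (\<Sum>x\<in>#R. cw x * Phi n cw P b k z w (R - {#x#}))
     + (\<Sum>p<length w. (if w ! p = n then 0 else cw (w ! p)) * Phi n cw P b k z (dl p w) R)"
proof (induction w arbitrary: b R)
  case Nil thus ?case using Phi_base_id by simp
next
  case (Cons y w)
  show ?case
  proof (cases "y = n")
    case True
    have sp: "(\<Sum>p<length (y # w). (if (y # w) ! p = n then 0 else cw ((y # w) ! p)) * Phi n cw P b k z (dl p (y # w)) R)
      = (\<Sum>p<length w. (if w ! p = n then 0 else cw (w ! p)) * Phi n cw P b k z (dl p w) R)"
      unfolding length_Cons sum.lessThan_Suc_shift using True by (simp cong: if_cong)
    show ?thesis unfolding sp using True Cons.IH[of b R] by simp
  next
    case False
    let ?F = "Phi n cw P"
    define c1 where "c1 = (\<lambda>p. if w ! p = n then 0 else cw (w ! p))"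
    have sp: "(\<Sum>p<length (y # w). (if (y # w) ! p = n then 0 else cw ((y # w) ! p)) * ?F b k z (dl p (y # w)) R)
      = cw y * ?F b k z w R + (\<Sum>p<length w. c1 p * ?F (add_mset y b) k z (dl p w) R)
         + (\<Sum>p<length w. c1 p * ?F b k z (dl p w) (add_mset y R))"
    proof -
      have e1: "\<And>p. (if (y # w) ! Suc p = n then 0 else cw ((y # w) ! Suc p)) * ?F b k z (dl (Suc p) (y # w)) R
          = c1 p * ?F (add_mset y b) k z (dl p w) R + c1 p * ?F b k z (dl p w) (add_mset y R)"
        using False by (simp add: c1_def distrib_left)
      have e0: "(if (y # w) ! 0 = n then 0 else cw ((y # w) ! 0)) * ?F b k z (dl 0 (y # w)) R = cw y * ?F b k z w R"
        using False by simp
      show ?thesis unfolding length_Cons sum.lessThan_Suc_shift e0 e1 sum.distrib by (simp only: add.assoc)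
    qed
    have sr: "(\<Sum>x\<in>#R. cw x * ?F b k z (y # w) (R - {#x#}))
       = (\<Sum>x\<in>#R. cw x * ?F (add_mset y b) k z w (R - {#x#})) + (\<Sum>x\<in>#R. cw x * ?F b k z w (add_mset y (R - {#x#})))"
      using False by (simp add: sum_mset.distrib distrib_left)
    have sr2: "(\<Sum>x\<in>#add_mset y R. cw x * ?F b k z w (add_mset y R - {#x#}))
       = cw y * ?F b k z w R + (\<Sum>x\<in>#R. cw x * ?F b k z w (add_mset y (R - {#x#})))"
    proof -
      have "(\<Sum>x\<in>#R. cw x * ?F b k z w (add_mset y R - {#x#})) = (\<Sum>x\<in>#R. cw x * ?F b k z w (add_mset y (R - {#x#})))"
      proof (rule arg_cong[where f=sum_mset], rule image_mset_cong)
        fix x assume "x \<in># R"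
        then obtain R' where "R = add_mset x R'" by (metis insert_DiffM)
        hence "add_mset y R - {#x#} = add_mset y (R - {#x#})" by (simp add: add_mset_commute)
        thus "cw x * ?F b k z w (add_mset y R - {#x#}) = cw x * ?F b k z w (add_mset y (R - {#x#}))" by simp
      qed
      thus ?thesis by simp
    qed
    have Fy: "?F b (Suc k) z (y # w) R = ?F (add_mset y b) (Suc k) z w R + ?F b (Suc k) z w (add_mset y R)"
      using False by simp
    have "?F b k (Suc z) (y # w) R = ?F (add_mset y b) k (Suc z) w R + ?F b k (Suc z) w (add_mset y R)"
      using False by simp
    also have "\<dots> = (?F (add_mset y b) (Suc k) z w R + (\<Sum>x\<in>#R. cw x * ?F (add_mset y b) k z w (R - {#x#}))
         + (\<Sum>p<length w. c1 p * ?F (add_mset y b) k z (dl p w) R))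
       + (?F b (Suc k) z w (add_mset y R) + (\<Sum>x\<in>#add_mset y R. cw x * ?F b k z w (add_mset y R - {#x#}))
         + (\<Sum>p<length w. c1 p * ?F b k z (dl p w) (add_mset y R)))"
      unfolding c1_def using Cons.IH[of "add_mset y b" R] Cons.IH[of b "add_mset y R"] by simp
    also have "\<dots> = ?F b (Suc k) z (y # w) R + (\<Sum>x\<in>#R. cw x * ?F b k z (y # w) (R - {#x#}))
     + (\<Sum>p<length (y # w). (if (y # w) ! p = n then 0 else cw ((y # w) ! p)) * ?F b k z (dl p (y # w)) R)"
      unfolding sp sr sr2 Fy by linarith
    finally show ?thesis .
  qed
qed


lemma prod_mset_nonneg: "(\<And>x. (cw::nat \<Rightarrow> real) x \<ge> 0) \<Longrightarrow> prod_mset (image_mset cw R) \<ge> 0"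
  by (induction R) auto

lemma Phi_nonneg:
  assumes "\<And>x. cw x \<ge> 0" "\<And>B K. P B K \<ge> 0"
  shows "Phi n cw P b k z w R \<ge> 0"
proof (induction w arbitrary: b R)
  case Nil thus ?case using assms prod_mset_nonneg[of cw R] by (simp add: ff_def)
next
  case (Cons y w) thus ?case by simp
qed

lemma Phi_bound:
  assumes "set w \<subseteq> insert n J" "set_mset b \<subseteq> J" "set_mset R \<subseteq> J"
    and est: "\<And>B R. set_mset B \<subseteq> J \<Longrightarrow> set_mset R \<subseteq> J \<Longrightarrow>
        ff z (size R) * prod_mset (image_mset cw R) * P B (k + z - size R) \<le> Q (B + R)"
    and Qnn: "\<And>B. Q B \<ge> 0"
  shows "Phi n cw P b k z w R \<le> 2 ^ length w * Q (b + R + mset (filter (\<lambda>x. x \<noteq> n) w))"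
  using assms(1-3)
proof (induction w arbitrary: b R)
  case Nil thus ?case using est by simp
next
  case (Cons y w)
  show ?case
  proof (cases "y = n")
    case True
    hence "Phi n cw P b k z (y # w) R \<le> 2 ^ length w * Q (b + R + mset (filter (\<lambda>x. x \<noteq> n) w))"
      using Cons by simp
    also have "\<dots> \<le> 2 ^ length (y # w) * Q (b + R + mset (filter (\<lambda>x. x \<noteq> n) w))"
      using Qnn by (simp add: mult_right_mono)
    finally show ?thesis using True by simp
  next
    case False
    hence yJ: "y \<in> J" using Cons.prems by auto
    have w: "set w \<subseteq> insert n J" using Cons.prems by auto
    have "Phi n cw P b k z (y # w) R = Phi n cw P (add_mset y b) k z w R + Phi n cw P b k z w (add_mset y R)"
      using False by simp
    also have "\<dots> \<le> 2 ^ length w * Q (add_mset y b + R + mset (filter (\<lambda>x. x \<noteq> n) w))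
        + 2 ^ length w * Q (b + add_mset y R + mset (filter (\<lambda>x. x \<noteq> n) w))"
      using Cons.IH[OF w, of "add_mset y b" R] Cons.IH[OF w, of b "add_mset y R"] Cons.prems yJ
      by (intro add_mono) auto
    also have "\<dots> = 2 ^ length (y # w) * Q (b + R + mset (filter (\<lambda>x. x \<noteq> n) (y # w)))"
      using False by simp
    finally show ?thesis .
  qed
qed

lemma mset_dl: "p < length ys \<Longrightarrow> mset (dl p ys) = mset ys - {#ys ! p#}"
  by (induction p ys rule: dl.induct) auto

context ops begin

definition G :: "'a \<Rightarrow> nat list \<Rightarrow> nat list \<Rightarrow> nat \<Rightarrow> real" where
  "G u \<beta> w k = cmod (cinner (op_word X \<beta> u) (op_word X w (op_word X (replicate k n) u)))"

lemma G_bound: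
  assumes n1: "n \<ge> 1" and uD: "u \<in> D"
    and Pb: "\<And>\<beta> k. set \<beta> \<subseteq> {1..n-1} \<Longrightarrow> cmod (cinner (op_word X \<beta> u) (op_word X (replicate k n) u)) \<le> P (mset \<beta>) k"
    and Pnn: "\<And>B K. P B K \<ge> 0"
  shows "set w \<subseteq> {1..n} \<Longrightarrow> set \<beta> \<subseteq> {1..n-1} \<Longrightarrow>
     G u \<beta> w k \<le> Phi n (\<lambda>x. cmod (c x)) P (mset \<beta>) k (count (mset w) n) w {#}"
proof (induction "length w" arbitrary: w \<beta> k rule: less_induct)
  case less
  let ?cw = "\<lambda>x. cmod (c x)"
  have nn: "n \<in> {1..n}" using n1 by simp
  have ZD: "\<And>k. op_word X (replicate k n) u \<in> D"
  proof -
    fix k have "set (replicate k n) \<subseteq> {1..n}" using nn by (cases k) auto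
    thus "op_word X (replicate k n) u \<in> D" by (rule word_D[OF _ uD])
  qed
  have bD: "op_word X \<beta> u \<in> D"
    using word_D[OF _ uD, of \<beta>] less.prems(2) by (meson atLeastatMost_subset_iff diff_le_self dual_order.refl order.trans)
  show ?case
  proof (cases w)
    case Nil thus ?thesis using Pb[OF less.prems(2)] by (simp add: G_def)
  next
    case (Cons y ys)
    have ys: "set ys \<subseteq> {1..n}" and y: "y \<in> {1..n}" using less.prems Cons by auto
    define \<kappa> where "\<kappa> = count (mset ys) n"
    show ?thesis
    proof (cases "y = n")
      case False
      hence yJ: "set (y # \<beta>) \<subseteq> {1..n-1}" using y less.prems(2) by auto
      have "G u \<beta> w k = cmod (cinner (op_word X \<beta> u) (X y (op_word X ys (op_word X (replicate k n) u))))"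
        by (simp add: G_def Cons)
      also have "\<dots> = cmod (cinner (X y (op_word X \<beta> u)) (op_word X ys (op_word X (replicate k n) u)))"
        using adj[OF y bD word_D[OF ys ZD]] by simp
      also have "\<dots> = G u (y # \<beta>) ys k" by (simp add: G_def)
      also have "\<dots> \<le> Phi n ?cw P (mset (y # \<beta>)) k \<kappa> ys {#}"
        unfolding \<kappa>_def using less.hyps[of ys "y # \<beta>" k] Cons ys yJ by simp
      also have "\<dots> \<le> Phi n ?cw P (mset \<beta>) k \<kappa> (y # ys) {#}"
        using False Phi_nonneg[of ?cw P n "mset \<beta>" k \<kappa> ys "{#y#}"] Pnn by simp
      finally show ?thesis using False Cons by (simp add: \<kappa>_def)
    next
      case True
      define Zk where "Zk = op_word X (replicate k n) u"
      have ZkD: "Zk \<in> D" unfolding Zk_def by (rule ZD)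
      have "G u \<beta> w k = cmod (cinner (op_word X \<beta> u) (X n (op_word X ys Zk)))"
        by (simp add: G_def Cons True Zk_def)
      also have "X n (op_word X ys Zk) = op_word X ys (X n Zk) - (\<Sum>p<length ys. scaleC (cc ys p) (op_word X (dl p ys) Zk))"
        by (rule commute_word[OF ys ZkD n1])
      also have "cinner (op_word X \<beta> u) \<dots> = cinner (op_word X \<beta> u) (op_word X ys (X n Zk))
           - (\<Sum>p<length ys. cc ys p * cinner (op_word X \<beta> u) (op_word X (dl p ys) Zk))"
        by (simp add: cinner_diff_right cinner_sum_right cinner_scaleC_right)
      also have "cmod \<dots> \<le> cmod (cinner (op_word X \<beta> u) (op_word X ys (X n Zk)))
           + (\<Sum>p<length ys. cmod (cc ys p) * cmod (cinner (op_word X \<beta> u) (op_word X (dl p ys) Zk)))"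
        by (rule order_trans[OF norm_triangle_ineq4]) (simp add: norm_mult order_trans[OF norm_sum])
      also have "\<dots> = G u \<beta> ys (Suc k) + (\<Sum>p<length ys. cmod (cc ys p) * G u \<beta> (dl p ys) k)"
        by (simp add: G_def Zk_def)
      also have "\<dots> \<le> Phi n ?cw P (mset \<beta>) (Suc k) \<kappa> ys {#}
          + (\<Sum>p<length ys. (if ys ! p = n then 0 else ?cw (ys ! p)) * Phi n ?cw P (mset \<beta>) k \<kappa> (dl p ys) {#})"
      proof (rule add_mono)
        show "G u \<beta> ys (Suc k) \<le> Phi n ?cw P (mset \<beta>) (Suc k) \<kappa> ys {#}"
          unfolding \<kappa>_def using less.hyps[of ys] Cons ys less.prems(2) by simp
        show "(\<Sum>p<length ys. cmod (cc ys p) * G u \<beta> (dl p ys) k)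
           \<le> (\<Sum>p<length ys. (if ys ! p = n then 0 else ?cw (ys ! p)) * Phi n ?cw P (mset \<beta>) k \<kappa> (dl p ys) {#})"
        proof (rule sum_mono)
          fix p assume p: "p \<in> {..<length ys}"
          show "cmod (cc ys p) * G u \<beta> (dl p ys) k \<le> (if ys ! p = n then 0 else ?cw (ys ! p)) * Phi n ?cw P (mset \<beta>) k \<kappa> (dl p ys) {#}"
          proof (cases "ys ! p = n")
            case True thus ?thesis by (simp add: cc_def)
          next
            case False
            have cnt: "count (mset (dl p ys)) n = \<kappa>" using p False by (simp add: mset_dl \<kappa>_def)
            have "G u \<beta> (dl p ys) k \<le> Phi n ?cw P (mset \<beta>) k \<kappa> (dl p ys) {#}"
              using less.hyps[of "dl p ys"] p Cons ys less.prems(2) set_dl[of p ys] cnt by (simp add: length_dl)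
            thus ?thesis using False by (simp add: cc_def mult_left_mono)
          qed
        qed
      qed
      also have "\<dots> = Phi n ?cw P (mset \<beta>) k (Suc \<kappa>) ys {#}"
        using Phi_id[of n ?cw P "mset \<beta>" k \<kappa> ys "{#}"] by simp
      also have "\<dots> = Phi n ?cw P (mset \<beta>) k (count (mset w) n) w {#}"
        using True Cons by (simp add: \<kappa>_def)
      finally show ?thesis .
    qed
  qed
qed

end


lemma ratio_mono:
  fixes a :: "nat \<Rightarrow> real"
  assumes pos: "\<And>p. a p > 0" and A1: "cond_A1 a" and ij: "i \<le> j"
  shows "a (Suc i) * a j \<le> a i * a (Suc j)"
  using ij
proof (induction j rule: dec_induct)
  case base thus ?case by (simp add: mult.commute)
next
  case (step j)
  have A: "(a (Suc j))^2 \<le> a j * a (Suc (Suc j))" using A1 unfolding cond_A1_def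
    by (metis Suc_eq_plus1 diff_Suc_1 le_add2)
  have "a (Suc i) * a (Suc j) * a j = (a (Suc i) * a j) * a (Suc j)" by (simp add: algebra_simps)
  also have "\<dots> \<le> (a i * a (Suc j)) * a (Suc j)" using step.IH pos by (intro mult_right_mono) (auto intro: less_imp_le)
  also have "\<dots> = a i * (a (Suc j))^2" by (simp add: power2_eq_square algebra_simps)
  also have "\<dots> \<le> a i * (a j * a (Suc (Suc j)))" using A pos by (intro mult_left_mono) (auto intro: less_imp_le)
  also have "\<dots> = a i * a (Suc (Suc j)) * a j" by (simp add: algebra_simps)
  finally show ?case using pos[of j] by simp
qed

lemma superadd:
  fixes a :: "nat \<Rightarrow> real"
  assumes pos: "\<And>p. a p > 0" and A1: "cond_A1 a" and a0: "a 0 = 1"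
  shows "a p * a q \<le> a (p + q)"
proof (induction p)
  case 0 thus ?case using a0 by simp
next
  case (Suc p)
  have R: "a (Suc p) * a (p + q) \<le> a p * a (Suc (p + q))" by (rule ratio_mono[OF pos A1]) simp
  have "a (Suc p) * a q * a p = a (Suc p) * (a p * a q)" by (simp add: algebra_simps)
  also have "\<dots> \<le> a (Suc p) * a (p + q)" using Suc.IH pos by (intro mult_left_mono) (auto intro: less_imp_le)
  also have "\<dots> \<le> a p * a (Suc (p + q))" by (rule R)
  finally have "a (Suc p) * a q * a p \<le> a (Suc (p + q)) * a p" by (simp add: algebra_simps)
  thus ?case using pos[of p] by simp
qed

lemma superadd_diff:
  fixes a :: "nat \<Rightarrow> real"
  assumes pos: "\<And>p. a p > 0" and A1: "cond_A1 a" and a0: "a 0 = 1" and "r \<le> K"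
  shows "a (K - r) * a r \<le> a K"
  using superadd[OF pos A1 a0, of "K - r" r] assms(4) by simp

lemma fact_A3:
  fixes a b :: "nat \<Rightarrow> real"
  assumes pa: "\<And>p. a p > 0" and pb: "\<And>p. b p > 0" and a0: "a 0 = 1" and b0: "b 0 = 1"
    and L: "L \<ge> 1" and A3: "\<forall>p\<ge>1. real p * a (p - 1) * b (p - 1) \<le> L * a p * b p"
  shows "fact r \<le> L ^ r * a r * b r"
proof (induction r)
  case 0 thus ?case using a0 b0 by simp
next
  case (Suc r)
  have S: "real (Suc r) * a r * b r \<le> L * a (Suc r) * b (Suc r)" using A3 by (metis diff_Suc_1 le_add1 plus_1_eq_Suc)
  have "(fact (Suc r) :: real) = real (Suc r) * fact r" by simp
  also have "\<dots> \<le> real (Suc r) * (L ^ r * a r * b r)" using Suc.IH by (intro mult_left_mono) auto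
  also have "\<dots> = L ^ r * (real (Suc r) * a r * b r)" by (simp add: algebra_simps)
  also have "\<dots> \<le> L ^ r * (L * a (Suc r) * b (Suc r))" using S L by (intro mult_left_mono) auto
  finally show ?case by (simp add: algebra_simps)
qed

lemma fact_sum_le:
  assumes "finite J"
  shows "(fact (sum f J) :: real) \<le> 2 ^ (card J * sum f J) * (\<Prod>j\<in>J. fact (f j))"
  using assms
proof (induction J rule: finite_induct)
  case empty thus ?case by simp
next
  case (insert i J)
  define S where "S = sum f J"
  have bf: "fact (f i) * fact S * (f i + S choose f i) = (fact (f i + S) :: nat)"
    using binomial_fact_lemma[of "f i" "f i + S"] by simp
  have "(fact (f i + S) :: real) = real (f i + S choose f i) * fact (f i) * fact S"
    using arg_cong[OF bf, of real] by (simp add: algebra_simps)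
  also have "\<dots> \<le> 2 ^ (f i + S) * fact (f i) * fact S"
  proof -
    have "real (f i + S choose f i) \<le> 2 ^ (f i + S)"
      using binomial_le_pow2[of "f i + S" "f i"] by (metis of_nat_le_iff of_nat_numeral of_nat_power)
    thus ?thesis by (intro mult_right_mono) auto
  qed
  also have "\<dots> \<le> 2 ^ (f i + S) * fact (f i) * (2 ^ (card J * S) * (\<Prod>j\<in>J. fact (f j)))"
    using insert.IH unfolding S_def by (intro mult_left_mono) auto
  also have "\<dots> = 2 ^ (f i + S + card J * S) * (\<Prod>j\<in>insert i J. fact (f j))"
    using insert.hyps by (simp add: power_add algebra_simps)
  also have "\<dots> \<le> 2 ^ (card (insert i J) * sum f (insert i J)) * (\<Prod>j\<in>insert i J. fact (f j))"
  proof (rule mult_right_mono)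
    have "f i + S + card J * S \<le> card (insert i J) * sum f (insert i J)"
      using insert.hyps by (simp add: S_def algebra_simps)
    thus "(2::real) ^ (f i + S + card J * S) \<le> 2 ^ (card (insert i J) * sum f (insert i J))"
      by (rule power_increasing) simp
  qed (auto intro: prod_nonneg)
  finally show ?case using insert.hyps by (simp add: S_def)
qed

lemma prod_superadd:
  fixes a :: "nat \<Rightarrow> real"
  assumes pos: "\<And>p. a p > 0" and A1: "cond_A1 a" and a0: "a 0 = 1" and "finite J"
  shows "(\<Prod>j\<in>J. a (f j)) \<le> a (sum f J)"
  using assms(4)
proof (induction J rule: finite_induct)
  case empty thus ?case using a0 by simp
next
  case (insert i J)
  have "(\<Prod>j\<in>insert i J. a (f j)) = a (f i) * (\<Prod>j\<in>J. a (f j))" using insert.hyps by simp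
  also have "\<dots> \<le> a (f i) * a (sum f J)" using insert.IH pos by (intro mult_left_mono) (auto intro: less_imp_le)
  also have "\<dots> \<le> a (f i + sum f J)" by (rule superadd[OF pos A1 a0])
  finally show ?case using insert.hyps by simp
qed

lemma size_sum_count:
  assumes "finite J" "set_mset R \<subseteq> J"
  shows "size R = (\<Sum>j\<in>J. count R j)"
  using assms(2)
proof (induction R)
  case empty thus ?case by simp
next
  case (add x R)
  have x: "x \<in> J" using add.prems by simp
  have "(\<Sum>j\<in>J. count (add_mset x R) j) = (\<Sum>j\<in>J. count R j + (if j = x then 1 else 0))"
    by (intro sum.cong) auto
  also have "\<dots> = (\<Sum>j\<in>J. count R j) + 1" using x assms(1) by (simp add: sum.distrib)
  finally show ?case using add by simp
qed

lemma prod_mset_nonneg': "(\<And>x. x \<in># R \<Longrightarrow> (cw::nat \<Rightarrow> real) x \<ge> 0) \<Longrightarrow> prod_mset (image_mset cw R) \<ge> 0"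
  by (induction R) auto

lemma prod_mset_le_pow:
  assumes "\<And>x. x \<in># R \<Longrightarrow> 0 \<le> (cw::nat \<Rightarrow> real) x \<and> cw x \<le> cm"
  shows "prod_mset (image_mset cw R) \<le> cm ^ size R"
  using assms
proof (induction R)
  case empty thus ?case by simp
next
  case (add x R)
  have "prod_mset (image_mset cw R) \<le> cm ^ size R" using add by auto
  moreover have "0 \<le> prod_mset (image_mset cw R)" using add.prems by (intro prod_mset_nonneg') auto
  moreover have "0 \<le> cw x" "cw x \<le> cm" using add.prems by auto
  ultimately show ?case by (simp add: mult_mono)
qed


locale seqs =
  fixes J :: "nat set" and m :: "nat \<Rightarrow> nat \<Rightarrow> real" and M :: "nat \<Rightarrow> real" and L :: real
  assumes finJ: "finite J"
    and mpos: "\<And>j p. j \<in> J \<Longrightarrow> m j p > 0"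
    and m0: "\<And>j. j \<in> J \<Longrightarrow> m j 0 = 1"
    and mA1: "\<And>j. j \<in> J \<Longrightarrow> cond_A1 (m j)"
    and Mpos: "\<And>p. M p > 0" and M0: "M 0 = 1" and MA1: "cond_A1 M"
    and L1: "L \<ge> 1"
    and A3L: "\<And>j. j \<in> J \<Longrightarrow> \<forall>p\<ge>1. real p * m j (p - 1) * M (p - 1) \<le> L * m j p * M p"
begin

definition mp :: "nat multiset \<Rightarrow> real" where
  "mp B = (\<Prod>j\<in>J. m j (count B j))"

lemma mp_pos: "mp B > 0"
  unfolding mp_def using mpos by (intro prod_pos) auto

lemma mp_mult: "mp B * mp R \<le> mp (B + R)"
proof -
  have "mp B * mp R = (\<Prod>j\<in>J. m j (count B j) * m j (count R j))"
    unfolding mp_def by (simp add: prod.distrib)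
  also have "\<dots> \<le> (\<Prod>j\<in>J. m j (count (B + R) j))"
  proof (rule prod_mono)
    fix j assume j: "j \<in> J"
    have "m j (count B j) * m j (count R j) \<le> m j (count B j + count R j)"
      by (rule superadd) (use mpos[OF j] mA1[OF j] m0[OF j] in auto)
    moreover have "0 \<le> m j (count B j) * m j (count R j)" using mpos[OF j] by (simp add: less_imp_le)
    ultimately show "0 \<le> m j (count B j) * m j (count R j) \<and> m j (count B j) * m j (count R j) \<le> m j (count (B + R) j)"
      by simp
  qed
  finally show ?thesis unfolding mp_def .
qed

lemma fact_bound:
  assumes R: "set_mset R \<subseteq> J"
  shows "fact (size R) \<le> (2 ^ card J * L) ^ size R * mp R * M (size R)"
proof -
  define f where "f = count R"
  define s where "s = sum f J"
  have s: "size R = s" unfolding s_def f_def by (rule size_sum_count[OF finJ R])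
  have "(fact s :: real) \<le> 2 ^ (card J * s) * (\<Prod>j\<in>J. fact (f j))"
    unfolding s_def by (rule fact_sum_le[OF finJ])
  also have "(\<Prod>j\<in>J. fact (f j)) \<le> (\<Prod>j\<in>J. L ^ f j * m j (f j) * M (f j))"
  proof (rule prod_mono)
    fix j assume j: "j \<in> J"
    show "0 \<le> (fact (f j) :: real) \<and> fact (f j) \<le> L ^ f j * m j (f j) * M (f j)"
      using fact_A3[of "m j" M, OF _ Mpos m0[OF j] M0 L1 A3L[OF j]] mpos[OF j] by auto
  qed
  also have "(\<Prod>j\<in>J. L ^ f j * m j (f j) * M (f j)) = L ^ s * mp R * (\<Prod>j\<in>J. M (f j))"
    unfolding s_def mp_def f_def by (simp add: prod.distrib power_sum)
  also have "\<dots> \<le> L ^ s * mp R * M s"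
  proof (rule mult_left_mono)
    show "(\<Prod>j\<in>J. M (f j)) \<le> M s" unfolding s_def by (rule prod_superadd[OF Mpos MA1 M0 finJ])
    show "0 \<le> L ^ s * mp R" using L1 mp_pos[of R] by simp
  qed
  finally have "(fact s :: real) \<le> 2 ^ (card J * s) * (L ^ s * mp R * M s)"
    by (simp add: mult_left_mono)
  moreover have "(2::real) ^ (card J * s) = (2 ^ card J) ^ s" by (simp add: power_mult)
  ultimately show ?thesis unfolding s by (simp add: power_mult_distrib algebra_simps)
qed

definition P :: "real \<Rightarrow> real \<Rightarrow> real \<Rightarrow> nat multiset \<Rightarrow> nat \<Rightarrow> real" where
  "P C1 C2 A B K = C1 * A ^ size B * mp B * (C2 * A ^ K * M K)"

lemma P_nonneg: "C1 > 0 \<Longrightarrow> C2 > 0 \<Longrightarrow> A > 0 \<Longrightarrow> P C1 C2 A B K \<ge> 0"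
  unfolding P_def using mp_pos[of B] Mpos[of K] by simp

lemma term_est:
  assumes C1: "C1 > 0" and C2: "C2 > 0" and A: "A > 0" and cm0: "cm \<ge> 0"
    and cw: "\<And>x. x \<in> J \<Longrightarrow> 0 \<le> cw x \<and> cw x \<le> cm"
    and AA: "2 ^ card J * L * cm \<le> A ^ 2"
    and B: "set_mset B \<subseteq> J" and R: "set_mset R \<subseteq> J"
  shows "ff z (size R) * prod_mset (image_mset cw R) * P C1 C2 A B (k + z - size R) \<le> 2 ^ z * P C1 C2 A (B + R) (k + z)"
proof (cases "size R \<le> z")
  case False
  hence "ff z (size R) = 0" unfolding ff_def by simp
  thus ?thesis using P_nonneg[OF C1 C2 A] by simp
next
  case True
  define r where "r = size R"
  define K where "K = k + z"
  define \<theta> where "\<theta> = 2 ^ card J * L"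
  define W where "W = prod_mset (image_mset cw R)"
  define T where "T = P C1 C2 A B (K - r)"
  have rK: "r \<le> K" using True unfolding r_def K_def by simp
  have th0: "\<theta> \<ge> 0" unfolding \<theta>_def using L1 by simp
  have T0: "T \<ge> 0" unfolding T_def by (rule P_nonneg[OF C1 C2 A])
  have W0: "W \<ge> 0" unfolding W_def using cw R by (intro prod_mset_nonneg') auto
  have W1: "W \<le> cm ^ r" unfolding W_def r_def using cw R by (intro prod_mset_le_pow) auto
  have h1: "ff z r \<le> 2 ^ z * fact r"
  proof -
    have "real (z choose r) \<le> 2 ^ z"
      using binomial_le_pow2[of z r] by (metis of_nat_le_iff of_nat_numeral of_nat_power)
    thus ?thesis unfolding ff_def by (intro mult_right_mono) auto
  qed
  have h3: "fact r \<le> \<theta> ^ r * mp R * M r" unfolding r_def \<theta>_def by (rule fact_bound[OF R])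
  have h4: "M (K - r) * M r \<le> M K" by (rule superadd_diff[OF Mpos MA1 M0 rK])
  have h5: "mp B * mp R \<le> mp (B + R)" by (rule mp_mult)
  have h6: "(\<theta> * cm) ^ r \<le> (A ^ 2) ^ r" using AA th0 cm0 unfolding \<theta>_def by (intro power_mono) auto
  have "ff z r * W * T \<le> (2 ^ z * fact r) * cm ^ r * T"
    using h1 W1 W0 T0 by (intro mult_right_mono mult_mono) auto
  also have "\<dots> \<le> (2 ^ z * (\<theta> ^ r * mp R * M r)) * cm ^ r * T"
    using h3 T0 cm0 by (intro mult_right_mono mult_left_mono) auto
  also have "\<dots> = 2 ^ z * C1 * C2 * ((\<theta> * cm) ^ r * A ^ size B * A ^ (K - r)) * (mp B * mp R) * (M (K - r) * M r)"
    unfolding T_def P_def by (simp add: power_mult_distrib algebra_simps)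
  also have "\<dots> \<le> 2 ^ z * C1 * C2 * ((A ^ 2) ^ r * A ^ size B * A ^ (K - r)) * mp (B + R) * M K"
  proof -
    have a: "0 \<le> 2 ^ z * C1 * C2" using C1 C2 by simp
    have b: "(\<theta> * cm) ^ r * A ^ size B * A ^ (K - r) \<le> (A ^ 2) ^ r * A ^ size B * A ^ (K - r)"
      using h6 A by (intro mult_right_mono) auto
    have c: "0 \<le> (\<theta> * cm) ^ r * A ^ size B * A ^ (K - r)" using th0 cm0 A by simp
    have d: "0 \<le> mp B * mp R" using mp_pos[of B] mp_pos[of R] by simp
    have e: "0 \<le> M (K - r) * M r" using Mpos[of "K - r"] Mpos[of r] by simp
    have "2 ^ z * C1 * C2 * ((\<theta> * cm) ^ r * A ^ size B * A ^ (K - r)) * (mp B * mp R) * (M (K - r) * M r)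
       \<le> 2 ^ z * C1 * C2 * ((A ^ 2) ^ r * A ^ size B * A ^ (K - r)) * mp (B + R) * (M (K - r) * M r)"
      using a b c d e h5 A by (intro mult_right_mono mult_mono mult_left_mono) auto
    also have "\<dots> \<le> 2 ^ z * C1 * C2 * ((A ^ 2) ^ r * A ^ size B * A ^ (K - r)) * mp (B + R) * M K"
      using h4 a A mp_pos[of "B + R"] by (intro mult_left_mono) auto
    finally show ?thesis .
  qed
  also have "\<dots> = 2 ^ z * P C1 C2 A (B + R) K"
  proof -
    have "(A ^ 2) ^ r * A ^ size B * A ^ (K - r) = A ^ size (B + R) * A ^ K"
    proof -
      have "(A ^ 2) ^ r * A ^ size B * A ^ (K - r) = A ^ (2 * r + size B + (K - r))"
        by (simp add: power_add power_mult)
      also have "2 * r + size B + (K - r) = size (B + R) + K" using rK unfolding r_def by simp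
      finally show ?thesis by (simp add: power_add)
    qed
    thus ?thesis unfolding P_def by (simp add: algebra_simps)
  qed
  finally show ?thesis unfolding r_def[symmetric] K_def[symmetric] W_def[symmetric] T_def[symmetric] .
qed

end


lemma cidx: "count_idx \<alpha> j = count (mset \<alpha>) j"
  by (induction \<alpha>) (auto simp: count_idx_def)

lemma op_word_const: "op_word (\<lambda>_. Y) \<alpha> v = op_word X (replicate (length \<alpha>) n) v" if "Y = X n"
  using that by (induction \<alpha>) auto

lemma in_dom_D:
  assumes "\<And>i. i \<in> set \<alpha> \<Longrightarrow> (\<forall>v\<in>D. Y i v \<in> D) \<and> D \<subseteq> DY i" "u \<in> D"
  shows "op_word Y \<alpha> u \<in> D \<and> in_dom_word Y DY \<alpha> u"
  using assms by (induction \<alpha>) auto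

lemma seq_weight_split:
  assumes "n \<ge> 1"
  shows "seq_weight n p \<alpha> = seq_weight (n - 1) p \<alpha> * p n (count_idx \<alpha> n)"
proof -
  have "{1..n} = insert n {1..n-1}" using assms by auto
  moreover have "n \<notin> {1..n-1}" by auto
  ultimately show ?thesis unfolding seq_weight_def by (simp add: mult.commute)
qed

lemma count_rev_app: "count (mset (rev \<alpha> @ \<alpha>)) j = 2 * count (mset \<alpha>) j"
  by simp

lemma count_filter_ne: "count (mset (filter (\<lambda>x. x \<noteq> n) w)) j = (if j = n then 0 else count (mset w) j)"
  by (induction w) auto

lemma size_filter_plus: "size (mset (filter (\<lambda>x. x \<noteq> n) w)) + count (mset w) n = length w"
proof -
  have "length (filter (\<lambda>x. x \<noteq> n) w) + count (mset w) n = length w" by (induction w) auto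
  thus ?thesis by (simp only: size_mset)
qed

lemma prod_double:
  fixes f :: "nat \<Rightarrow> nat \<Rightarrow> real"
  assumes "finite I" and H: "H > 0" and pos: "\<And>j p. j \<in> I \<Longrightarrow> f j p > 0"
    and A2: "\<And>j p q. j \<in> I \<Longrightarrow> f j (p + q) \<le> H ^ (p + q) * f j p * f j q"
  shows "(\<Prod>j\<in>I. f j (2 * a j)) \<le> H ^ (2 * sum a I) * (\<Prod>j\<in>I. f j (a j))^2"
proof -
  have "(\<Prod>j\<in>I. f j (2 * a j)) \<le> (\<Prod>j\<in>I. H ^ (2 * a j) * (f j (a j))^2)"
  proof (rule prod_mono)
    fix j assume j: "j \<in> I"
    have e: "2 * a j = a j + a j" by simp
    have "f j (a j + a j) \<le> H ^ (a j + a j) * f j (a j) * f j (a j)" by (rule A2[OF j])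
    hence "f j (2 * a j) \<le> H ^ (2 * a j) * (f j (a j))^2" unfolding e by (simp only: power2_eq_square mult.assoc)
    moreover have "0 \<le> f j (2 * a j)" using pos[OF j, of "2 * a j"] by simp
    ultimately show "0 \<le> f j (2 * a j) \<and> f j (2 * a j) \<le> H ^ (2 * a j) * (f j (a j))^2" by simp
  qed
  also have "\<dots> = H ^ (2 * sum a I) * (\<Prod>j\<in>I. f j (a j))^2"
    by (simp add: prod.distrib power_sum prod_power_distrib sum_distrib_left)
  finally show ?thesis .
qed


theorem proposition2p4:
  fixes n :: nat
    and X :: "nat \<Rightarrow> 'a::complex_hilbert \<Rightarrow> 'a"
    and DX :: "nat \<Rightarrow> 'a set"
    and D :: "'a set"
    and m :: "nat \<Rightarrow> nat \<Rightarrow> real"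
    and c :: "nat \<Rightarrow> complex"
    and u :: 'a
  assumes n2: "n \<ge> 2"
    and herm: "\<forall>j\<in>{1..n}. hermitian_op (X j) (DX j) \<or> skew_hermitian_op (X j) (DX j)"
    and D_sub: "\<forall>j\<in>{1..n}. D \<subseteq> DX j"
    and D_inv: "\<forall>j\<in>{1..n}. X j ` D \<subseteq> D"
    and m_pos: "\<forall>j\<in>{1..n}. \<forall>p. m j p > 0"
    and A0: "\<forall>j\<in>{1..n}. cond_A0 (m j)"
    and A1: "\<forall>j\<in>{1..n}. cond_A1 (m j)"
    and A2: "cond_A2 n m"
    and A3: "\<forall>j\<in>{1..n-1}. cond_A3 (m j) (m n)"
    and comm: "\<forall>j\<in>{1..n-1}. \<forall>v\<in>D. X j (X n v) - X n (X j v) = scaleC (c j) v"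
    and uD: "u \<in> D"
  shows "u \<in> S_space n m X DX \<longleftrightarrow>
         u \<in> S_space (n - 1) m X DX \<inter> S_space 1 (\<lambda>_. m n) (\<lambda>_. X n) (\<lambda>_. DX n)"
proof -
  have n1: "n \<ge> 1" using n2 by simp
  have nn: "n \<in> {1..n}" using n1 by simp
  interpret O: ops n X DX D c using herm D_sub D_inv comm by unfold_locales
  define J where "J = {1..n-1}"
  have JI: "{1..n} = insert n J" using n1 unfolding J_def by auto
  have nJ: "n \<notin> J" unfolding J_def by auto
  have finJ: "finite J" unfolding J_def by simp
  have JS: "J \<subseteq> {1..n}" unfolding J_def by auto
  have sub1: "{1..n-1} \<subseteq> {1..n::nat}" by auto
  have indom: "\<And>\<alpha>. set \<alpha> \<subseteq> {1..n} \<Longrightarrow> in_dom_word X DX \<alpha> u"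
  proof -
    fix \<alpha> :: "nat list" assume a: "set \<alpha> \<subseteq> {1..n}"
    have "\<And>i. i \<in> set \<alpha> \<Longrightarrow> (\<forall>v\<in>D. X i v \<in> D) \<and> D \<subseteq> DX i"
      using a O.inD O.inDX by blast
    thus "in_dom_word X DX \<alpha> u" using in_dom_D[OF _ uD, of \<alpha> X DX] by blast
  qed
  have Cinf: "u \<in> C_inf n X DX" unfolding C_inf_def multi_indices_def using indom by auto
  have m0: "\<And>j. j \<in> {1..n} \<Longrightarrow> m j 0 = 1" using A0 unfolding cond_A0_def by auto
  have sw_rep: "\<And>k. seq_weight n m (replicate k n) = m n k"
  proof -
    fix k
    have "seq_weight n m (replicate k n) = seq_weight (n - 1) m (replicate k n) * m n (count_idx (replicate k n) n)"
      by (rule seq_weight_split[OF n1])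
    also have "seq_weight (n - 1) m (replicate k n) = 1"
      unfolding seq_weight_def using m0 by (intro prod.neutral) (auto simp: cidx)
    finally show "seq_weight n m (replicate k n) = m n k" by (simp add: cidx)
  qed
  have opc: "\<And>\<alpha>. op_word (\<lambda>_. X n) \<alpha> u = op_word X (replicate (length \<alpha>) n) u"
    by (rule op_word_const) simp
  have cidx1: "\<And>\<alpha>. \<alpha> \<in> multi_indices 1 \<Longrightarrow> count_idx \<alpha> 1 = length \<alpha>"
  proof -
    fix \<alpha> :: "nat list" assume "\<alpha> \<in> multi_indices 1"
    hence "set \<alpha> \<subseteq> {1}" unfolding multi_indices_def by auto
    thus "count_idx \<alpha> 1 = length \<alpha>" unfolding count_idx_def by (induction \<alpha>) auto
  qed
  have sw1: "\<And>\<alpha>. \<alpha> \<in> multi_indices 1 \<Longrightarrow> seq_weight 1 (\<lambda>_. m n) \<alpha> = m n (length \<alpha>)"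
    unfolding seq_weight_def using cidx1 by simp
  have Cinf1: "u \<in> C_inf 1 (\<lambda>_. X n) (\<lambda>_. DX n)"
  proof -
    have "\<And>i. (\<forall>v\<in>D. X n v \<in> D) \<and> D \<subseteq> DX n" using O.inD[OF nn] O.inDX[OF nn] by blast
    thus ?thesis unfolding C_inf_def using in_dom_D[OF _ uD, of _ "\<lambda>_. X n" "\<lambda>_. DX n"] by blast
  qed
  show ?thesis
  proof
    assume "u \<in> S_space n m X DX"
    then obtain A C where A: "A > 0" and C: "C > 0"
      and bnd: "\<forall>\<alpha>\<in>multi_indices n. norm (op_word X \<alpha> u) \<le> C * A ^ length \<alpha> * seq_weight n m \<alpha>"
      unfolding S_space_def by blast
    have "u \<in> S_space (n - 1) m X DX"
    proof -
      have "u \<in> C_inf (n - 1) X DX" unfolding C_inf_def multi_indices_def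
      proof (safe)
        fix \<alpha> :: "nat list" assume "set \<alpha> \<subseteq> {1..n-1}"
        moreover have "{1..n-1} \<subseteq> {1..n::nat}" by auto
        ultimately have "set \<alpha> \<subseteq> {1..n}" by (rule subset_trans)
        thus "in_dom_word X DX \<alpha> u" by (rule indom)
      qed
      moreover have "\<forall>\<alpha>\<in>multi_indices (n - 1). norm (op_word X \<alpha> u) \<le> C * A ^ length \<alpha> * seq_weight (n - 1) m \<alpha>"
      proof
        fix \<alpha> assume a: "\<alpha> \<in> multi_indices (n - 1)"
        have a0: "\<alpha> \<noteq> []" and a1: "set \<alpha> \<subseteq> {1..n-1}" using a unfolding multi_indices_def by auto
        have a': "\<alpha> \<in> multi_indices n" unfolding multi_indices_def using a0 subset_trans[OF a1 sub1] by simp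
        have "n \<notin> {1..n-1}" by auto
        hence "n \<notin> set \<alpha>" using a1 by blast
        hence "count_idx \<alpha> n = 0" by (simp add: cidx count_eq_zero_iff)
        hence "seq_weight n m \<alpha> = seq_weight (n - 1) m \<alpha>" using seq_weight_split[OF n1, of m \<alpha>] m0[OF nn] by simp
        thus "norm (op_word X \<alpha> u) \<le> C * A ^ length \<alpha> * seq_weight (n - 1) m \<alpha>" using bnd a' by metis
      qed
      ultimately show ?thesis unfolding S_space_def using A C by blast
    qed
    moreover have "u \<in> S_space 1 (\<lambda>_. m n) (\<lambda>_. X n) (\<lambda>_. DX n)"
    proof -
      have "\<forall>\<alpha>\<in>multi_indices 1. norm (op_word (\<lambda>_. X n) \<alpha> u) \<le> C * A ^ length \<alpha> * seq_weight 1 (\<lambda>_. m n) \<alpha>"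
      proof
        fix \<alpha> assume a: "\<alpha> \<in> multi_indices 1"
        have r: "replicate (length \<alpha>) n \<in> multi_indices n" using a n1 unfolding multi_indices_def by auto
        show "norm (op_word (\<lambda>_. X n) \<alpha> u) \<le> C * A ^ length \<alpha> * seq_weight 1 (\<lambda>_. m n) \<alpha>"
          using bnd r unfolding opc sw1[OF a] by (metis length_replicate sw_rep)
      qed
      thus ?thesis unfolding S_space_def using A C Cinf1 by blast
    qed
    ultimately show "u \<in> S_space (n - 1) m X DX \<inter> S_space 1 (\<lambda>_. m n) (\<lambda>_. X n) (\<lambda>_. DX n)" by blast
  next
    assume "u \<in> S_space (n - 1) m X DX \<inter> S_space 1 (\<lambda>_. m n) (\<lambda>_. X n) (\<lambda>_. DX n)"
    then obtain A1 C1 A2 C2 where A1p: "A1 > 0" and C1: "C1 > 0" and A2p: "A2 > 0" and C2: "C2 > 0"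
      and b1: "\<forall>\<alpha>\<in>multi_indices (n - 1). norm (op_word X \<alpha> u) \<le> C1 * A1 ^ length \<alpha> * seq_weight (n - 1) m \<alpha>"
      and b2: "\<forall>\<alpha>\<in>multi_indices 1. norm (op_word (\<lambda>_. X n) \<alpha> u) \<le> C2 * A2 ^ length \<alpha> * seq_weight 1 (\<lambda>_. m n) \<alpha>"
      unfolding S_space_def by blast
    obtain H where H: "H > 0" and HA2: "\<forall>j\<in>{1..n}. \<forall>p q. m j (p + q) \<le> H ^ (p + q) * m j p * m j q"
      using A2 unfolding cond_A2_def by blast
    have "\<forall>j\<in>J. \<exists>L. L \<ge> 1 \<and> (\<forall>p\<ge>1. real p * m j (p - 1) * m n (p - 1) \<le> L * m j p * m n p)"
      using A3 unfolding cond_A3_def J_def by blast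
    from bchoice[OF this] obtain Lf where Lf: "\<forall>j\<in>J. Lf j \<ge> 1 \<and> (\<forall>p\<ge>1. real p * m j (p - 1) * m n (p - 1) \<le> Lf j * m j p * m n p)"
      by blast
    define L where "L = 1 + (\<Sum>j\<in>J. Lf j)"
    have Lfnn: "\<And>j. j \<in> J \<Longrightarrow> Lf j \<ge> 0" using Lf by force
    have L1: "L \<ge> 1" unfolding L_def using Lfnn by (simp add: sum_nonneg)
    have LLf: "\<And>j. j \<in> J \<Longrightarrow> Lf j \<le> L"
    proof -
      fix j assume j: "j \<in> J"
      have "Lf j \<le> (\<Sum>j\<in>J. Lf j)" by (rule member_le_sum[OF j]) (auto intro: Lfnn simp: finJ)
      thus "Lf j \<le> L" unfolding L_def by simp
    qed
    have mposJ: "\<And>j p. j \<in> J \<Longrightarrow> m j p > 0" using m_pos JS by blast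
    have Mpos: "\<And>p. m n p > 0" using m_pos nn by blast
    have A3L: "\<And>j. j \<in> J \<Longrightarrow> \<forall>p\<ge>1. real p * m j (p - 1) * m n (p - 1) \<le> L * m j p * m n p"
    proof (intro allI impI)
      fix j p assume j: "j \<in> J" and p: "(p::nat) \<ge> 1"
      have "real p * m j (p - 1) * m n (p - 1) \<le> Lf j * m j p * m n p" using Lf j p by blast
      also have "\<dots> \<le> L * m j p * m n p"
        using LLf[OF j] mposJ[OF j, of p] Mpos[of p] by (simp add: mult_right_mono)
      finally show "real p * m j (p - 1) * m n (p - 1) \<le> L * m j p * m n p" .
    qed
    interpret S: seqs J m "m n" L
    proof
      show "finite J" by (rule finJ)
      show "\<And>j p. j \<in> J \<Longrightarrow> 0 < m j p" by (rule mposJ)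
      show "\<And>j. j \<in> J \<Longrightarrow> m j 0 = 1" using m0 JS by blast
      show "\<And>j. j \<in> J \<Longrightarrow> cond_A1 (m j)" using A1 JS by blast
      show "\<And>p. 0 < m n p" by (rule Mpos)
      show "m n 0 = 1" using m0 nn by blast
      show "cond_A1 (m n)" using A1 nn by blast
      show "1 \<le> L" by (rule L1)
      show "\<And>j. j \<in> J \<Longrightarrow> \<forall>p\<ge>1. real p * m j (p - 1) * m n (p - 1) \<le> L * m j p * m n p" by (rule A3L)
    qed
    define cw where "cw = (\<lambda>x. cmod (c x))"
    define cm where "cm = 1 + (\<Sum>j\<in>J. cmod (c j))"
    have cm0: "cm \<ge> 0" unfolding cm_def by (simp add: sum_nonneg)
    have cwJ: "\<And>x. x \<in> J \<Longrightarrow> 0 \<le> cw x \<and> cw x \<le> cm"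
    proof -
      fix x assume x: "x \<in> J"
      have "cmod (c x) \<le> (\<Sum>j\<in>J. cmod (c j))" by (rule member_le_sum[OF x]) (auto simp: finJ)
      thus "0 \<le> cw x \<and> cw x \<le> cm" unfolding cw_def cm_def by simp
    qed
    define t where "t = 2 ^ card J * L * cm"
    have t0: "t \<ge> 0" unfolding t_def using L1 cm0 by simp
    define A where "A = max (max A1 A2) (max 1 (sqrt t))"
    have A: "A > 0" and AA1: "A1 \<le> A" and AA2: "A2 \<le> A" and Asq: "sqrt t \<le> A" unfolding A_def by auto
    have AA: "2 ^ card J * L * cm \<le> A ^ 2"
    proof -
      have "(sqrt t)^2 \<le> A^2" using Asq t0 by (intro power_mono) auto
      thus ?thesis using t0 unfolding t_def by simp
    qed
    define C1' where "C1' = max C1 (norm u)"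
    define C2' where "C2' = max C2 (norm u)"
    have C1': "C1' > 0" and C2': "C2' > 0" using C1 C2 unfolding C1'_def C2'_def by auto
    define P' where "P' = S.P C1' C2' A"
    have P'nn: "\<And>B K. P' B K \<ge> 0" unfolding P'_def by (rule S.P_nonneg[OF C1' C2' A])
    have mp0: "S.mp {#} = 1" unfolding S.mp_def using m0 JS by (intro prod.neutral) auto
    have PB1: "\<And>\<beta>. set \<beta> \<subseteq> J \<Longrightarrow> norm (op_word X \<beta> u) \<le> C1' * A ^ length \<beta> * S.mp (mset \<beta>)"
    proof -
      fix \<beta> :: "nat list" assume bJ: "set \<beta> \<subseteq> J"
      show "norm (op_word X \<beta> u) \<le> C1' * A ^ length \<beta> * S.mp (mset \<beta>)"
      proof (cases "\<beta> = []")
        case True thus ?thesis using mp0 unfolding C1'_def by simp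
      next
        case False
        hence bm: "\<beta> \<in> multi_indices (n - 1)" using bJ unfolding multi_indices_def J_def by simp
        have sw: "seq_weight (n - 1) m \<beta> = S.mp (mset \<beta>)" unfolding seq_weight_def S.mp_def by (simp add: cidx J_def)
        have "norm (op_word X \<beta> u) \<le> C1 * A1 ^ length \<beta> * S.mp (mset \<beta>)" using b1 bm sw by metis
        also have "\<dots> \<le> C1' * A ^ length \<beta> * S.mp (mset \<beta>)"
          using C1 A1p AA1 S.mp_pos[of "mset \<beta>"] unfolding C1'_def
          by (intro mult_right_mono mult_mono power_mono) auto
        finally show ?thesis .
      qed
    qed
    have PB2: "\<And>k. norm (op_word X (replicate k n) u) \<le> C2' * A ^ k * m n k"
    proof -
      fix k :: nat
      show "norm (op_word X (replicate k n) u) \<le> C2' * A ^ k * m n k"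
      proof (cases "k = 0")
        case True thus ?thesis using m0 nn unfolding C2'_def by simp
      next
        case False
        define \<alpha> where "\<alpha> = replicate k (1::nat)"
        have am: "\<alpha> \<in> multi_indices 1" using False unfolding \<alpha>_def multi_indices_def by simp
        have "norm (op_word X (replicate k n) u) = norm (op_word (\<lambda>_. X n) \<alpha> u)" unfolding opc \<alpha>_def by simp
        also have "\<dots> \<le> C2 * A2 ^ k * m n k" using b2 am sw1[OF am] unfolding \<alpha>_def by (metis length_replicate)
        also have "\<dots> \<le> C2' * A ^ k * m n k"
          using C2 A2p AA2 Mpos[of k] unfolding C2'_def by (intro mult_right_mono mult_mono power_mono) auto
        finally show ?thesis .
      qed
    qed
    have Pb: "\<And>\<beta> k. set \<beta> \<subseteq> {1..n-1} \<Longrightarrow> cmod (cinner (op_word X \<beta> u) (op_word X (replicate k n) u)) \<le> P' (mset \<beta>) k"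
    proof -
      fix \<beta> :: "nat list" and k :: nat assume bJ: "set \<beta> \<subseteq> {1..n-1}"
      have "cmod (cinner (op_word X \<beta> u) (op_word X (replicate k n) u)) \<le> norm (op_word X \<beta> u) * norm (op_word X (replicate k n) u)"
        by (rule cauchy_schwarz)
      also have "\<dots> \<le> (C1' * A ^ length \<beta> * S.mp (mset \<beta>)) * (C2' * A ^ k * m n k)"
      proof (rule mult_mono)
        show "norm (op_word X \<beta> u) \<le> C1' * A ^ length \<beta> * S.mp (mset \<beta>)" using PB1[of \<beta>] bJ unfolding J_def by blast
        show "norm (op_word X (replicate k n) u) \<le> C2' * A ^ k * m n k" by (rule PB2)
        show "0 \<le> C1' * A ^ length \<beta> * S.mp (mset \<beta>)" using C1' A S.mp_pos[of "mset \<beta>"] by simp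
      qed simp
      also have "\<dots> = P' (mset \<beta>) k" unfolding P'_def S.P_def by simp
      finally show "cmod (cinner (op_word X \<beta> u) (op_word X (replicate k n) u)) \<le> P' (mset \<beta>) k" .
    qed
    have main: "\<forall>\<alpha>\<in>multi_indices n. norm (op_word X \<alpha> u) \<le> sqrt (C1' * C2') * (4 * A * H) ^ length \<alpha> * seq_weight n m \<alpha>"
    proof
      fix \<alpha> assume am: "\<alpha> \<in> multi_indices n"
      hence aS: "set \<alpha> \<subseteq> {1..n}" unfolding multi_indices_def by simp
      define w where "w = rev \<alpha> @ \<alpha>"
      define l where "l = length \<alpha>"
      define z where "z = count (mset w) n"
      define xm where "xm = mset (filter (\<lambda>x. x \<noteq> n) w)"
      have wS: "set w \<subseteq> {1..n}" unfolding w_def using aS by simp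
      have aD: "op_word X \<alpha> u \<in> D" by (rule O.word_D[OF aS uD])
      have "(norm (op_word X \<alpha> u))^2 = cmod (cinner (op_word X \<alpha> u) (op_word X \<alpha> u))"
        by (simp add: cinner_self_cmod)
      also have "\<dots> = cmod (cinner u (op_word X (rev \<alpha>) (op_word X \<alpha> u)))"
        by (rule O.adj_word[OF aS uD aD])
      also have "\<dots> = O.G u [] w 0" unfolding O.G_def w_def by (simp add: op_word_append)
      also have "\<dots> \<le> Phi n cw P' (mset []) 0 z w {#}"
        unfolding z_def cw_def using O.G_bound[OF n1 uD Pb P'nn wS, of "[]" 0] by simp
      also have "\<dots> \<le> 2 ^ length w * (2 ^ z * P' (mset [] + {#} + xm) (0 + z))"
        unfolding xm_def
      proof (rule Phi_bound[where J = J])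
        show "set w \<subseteq> insert n J" using wS JI by simp
        show "set_mset (mset []) \<subseteq> J" "set_mset {#} \<subseteq> J" by auto
        show "\<And>B. 0 \<le> 2 ^ z * P' B (0 + z)" using P'nn by simp
        fix B R :: "nat multiset" assume "set_mset B \<subseteq> J" "set_mset R \<subseteq> J"
        thus "ff z (size R) * prod_mset (image_mset cw R) * P' B (0 + z - size R) \<le> 2 ^ z * P' (B + R) (0 + z)"
          unfolding P'_def using S.term_est[where cw=cw and cm=cm, OF C1' C2' A cm0 cwJ AA] by blast
      qed
      also have "\<dots> = 2 ^ (2 * l) * 2 ^ z * P' xm z" unfolding w_def l_def by simp
      also have "\<dots> \<le> 2 ^ (2 * l) * 2 ^ (2 * l) * (C1' * C2' * A ^ (2 * l) * (H ^ (2 * l) * (seq_weight n m \<alpha>)^2))"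
      proof -
        have zl: "z = 2 * count (mset \<alpha>) n" unfolding z_def w_def by simp
        have sz: "size xm + z = 2 * l" unfolding xm_def z_def using size_filter_plus[of n w] unfolding w_def l_def by simp
        have z2l: "z \<le> 2 * l" using sz by simp
        have cxm: "\<And>j. j \<in> J \<Longrightarrow> count xm j = 2 * count (mset \<alpha>) j"
          unfolding xm_def w_def using nJ by (auto simp: count_filter_ne)
        have "S.mp xm * m n z = (\<Prod>j\<in>{1..n}. m j (2 * count (mset \<alpha>) j))"
        proof -
          have "S.mp xm = (\<Prod>j\<in>J. m j (2 * count (mset \<alpha>) j))" unfolding S.mp_def using cxm by (intro prod.cong) auto
          thus ?thesis unfolding JI zl using nJ finJ by (simp add: mult.commute)
        qed
        also have "\<dots> \<le> H ^ (2 * (\<Sum>j\<in>{1..n}. count (mset \<alpha>) j)) * (\<Prod>j\<in>{1..n}. m j (count (mset \<alpha>) j))^2"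
          by (rule prod_double) (use H m_pos HA2 in auto)
        also have "(\<Sum>j\<in>{1..n}. count (mset \<alpha>) j) = l" unfolding l_def
          using size_sum_count[of "{1..n}" "mset \<alpha>"] aS by simp
        also have "(\<Prod>j\<in>{1..n}. m j (count (mset \<alpha>) j)) = seq_weight n m \<alpha>" unfolding seq_weight_def by (simp add: cidx)
        finally have mpb: "S.mp xm * m n z \<le> H ^ (2 * l) * (seq_weight n m \<alpha>)^2" .
        have "P' xm z = C1' * C2' * A ^ (size xm + z) * (S.mp xm * m n z)" unfolding P'_def S.P_def by (simp add: power_add algebra_simps)
        also have "\<dots> \<le> C1' * C2' * A ^ (2 * l) * (H ^ (2 * l) * (seq_weight n m \<alpha>)^2)"
          unfolding sz using mpb C1' C2' A by (intro mult_left_mono) auto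
        finally have "P' xm z \<le> C1' * C2' * A ^ (2 * l) * (H ^ (2 * l) * (seq_weight n m \<alpha>)^2)" .
        moreover have "(2::real) ^ z \<le> 2 ^ (2 * l)" using z2l by (intro power_increasing) auto
        ultimately show ?thesis using P'nn[of xm z] by (intro mult_left_mono mult_mono) auto
      qed
      also have "\<dots> = (sqrt (C1' * C2') * (4 * A * H) ^ l * seq_weight n m \<alpha>)^2"
      proof -
        define sw where "sw = seq_weight n m \<alpha>"
        have e0: "(sqrt (C1' * C2'))^2 = C1' * C2'" using C1' C2' by simp
        have e1: "(sqrt (C1' * C2') * (4 * A * H) ^ l * sw)^2 = (sqrt (C1' * C2'))^2 * ((4 * A * H) ^ l)^2 * sw^2"
          by (simp add: power_mult_distrib)
        have e2: "((4 * A * H) ^ l)^2 = (4::real) ^ (2 * l) * A ^ (2 * l) * H ^ (2 * l)"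
          by (simp add: power_mult_distrib power_mult[symmetric] mult.commute)
        have e3: "(2::real) ^ (2 * l) * 2 ^ (2 * l) = 4 ^ (2 * l)"
          by (simp add: power_mult_distrib[symmetric])
        show ?thesis unfolding sw_def[symmetric] e1 e2 e0 using e3 by (simp add: mult_ac)
      qed
      finally have sq: "(norm (op_word X \<alpha> u))^2 \<le> (sqrt (C1' * C2') * (4 * A * H) ^ l * seq_weight n m \<alpha>)^2" .
      have swp: "seq_weight n m \<alpha> > 0" unfolding seq_weight_def using m_pos by (intro prod_pos) auto
      have "0 \<le> sqrt (C1' * C2') * (4 * A * H) ^ l * seq_weight n m \<alpha>" using A H swp C1' C2' by simp
      hence "norm (op_word X \<alpha> u) \<le> sqrt (C1' * C2') * (4 * A * H) ^ l * seq_weight n m \<alpha>"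
        by (rule power2_le_imp_le[OF sq])
      thus "norm (op_word X \<alpha> u) \<le> sqrt (C1' * C2') * (4 * A * H) ^ length \<alpha> * seq_weight n m \<alpha>" unfolding l_def .
    qed
    have "sqrt (C1' * C2') > 0" "4 * A * H > 0" using C1' C2' A H by auto
    thus "u \<in> S_space n m X DX" unfolding S_space_def using Cinf main by blast

  qed
qed


end
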